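(* Let $G$ be an equimatchable graph and let $k,\ell$ be integers with $1\leq \ell<k\leq\nu(G)$. Then $I(G)^{[k]}:I(G)^{[\ell]}=I(G)^{[k]}$.
   Context: A finite simple graph is equimatchable if every maximal (by inclusion) matching is a maximum matching. Vertices are identified with variables of $S=K[x_1,\ldots,x_n]$ ($K$ a field), edges with degree-2 monomials. $I(G)^{[k]}$ is the ideal generated by all products $e_1\cdots e_k$ over $k$-matchings of $G$; $I(G)^{[1]}=I(G)$ is the edge ideal. $\nu(G)$ is the matching number. *)

theory Defs
  imports Main "HOL-Library.Poly_Mapping"
begin

type_synonym 'a mpoly = "(nat \<Rightarrow>\<^sub>0 nat) \<Rightarrow>\<^sub>0 'a"

definition poly_ring :: "nat set \<Rightarrow> ('a::comm_ring_1) mpoly set" where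
  "poly_ring V = {p :: 'a mpoly. \<forall>m \<in> Poly_Mapping.keys p. Poly_Mapping.keys m \<subseteq> V}"

definition ideal_gen :: "nat set \<Rightarrow> ('a::comm_ring_1) mpoly set \<Rightarrow> 'a mpoly set" where
  "ideal_gen V G = {(\<Sum>g\<in>F. r g * g) | F r. finite F \<and> F \<subseteq> G \<and> (\<forall>g\<in>F. r g \<in> poly_ring V)}"

definition colon_ideal :: "nat set \<Rightarrow> ('a::comm_ring_1) mpoly set \<Rightarrow> 'a mpoly set \<Rightarrow> 'a mpoly set" where
  "colon_ideal V I J = {f \<in> poly_ring V. \<forall>g\<in>J. f * g \<in> I}"

definition simple_graph :: "nat \<Rightarrow> nat set set \<Rightarrow> bool" where
  "simple_graph n E \<longleftrightarrow> (\<forall>e\<in>E. card e = 2 \<and> e \<subseteq> {1..n})"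

definition matching :: "nat set set \<Rightarrow> nat set set \<Rightarrow> bool" where
  "matching E M \<longleftrightarrow> M \<subseteq> E \<and> (\<forall>e\<in>M. \<forall>e'\<in>M. e \<noteq> e' \<longrightarrow> e \<inter> e' = {})"

definition maximal_matching :: "nat set set \<Rightarrow> nat set set \<Rightarrow> bool" where
  "maximal_matching E M \<longleftrightarrow> matching E M \<and> (\<forall>M'. matching E M' \<and> M \<subseteq> M' \<longrightarrow> M' = M)"

definition matching_number :: "nat set set \<Rightarrow> nat" where
  "matching_number E = Max {card M | M. matching E M}"

definition maximum_matching :: "nat set set \<Rightarrow> nat set set \<Rightarrow> bool" where
  "maximum_matching E M \<longleftrightarrow> matching E M \<and> card M = matching_number E"

definition equimatchable :: "nat set set \<Rightarrow> bool" where
  "equimatchable E \<longleftrightarrow> (\<forall>M. maximal_matching E M \<longrightarrow> maximum_matching E M)"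

text \<open>The degree-2 monomial x_i x_j of an edge {i,j}.\<close>
definition edge_mono :: "nat set \<Rightarrow> ('a::comm_ring_1) mpoly" where
  "edge_mono e = Poly_Mapping.single (\<Sum>i\<in>e. Poly_Mapping.single i 1) 1"

text \<open>I(G)^[k]: generated by products e_1...e_k over k-matchings.\<close>
definition sqf_power :: "nat set \<Rightarrow> nat set set \<Rightarrow> nat \<Rightarrow> ('a::comm_ring_1) mpoly set" where
  "sqf_power V E k = ideal_gen V {(\<Prod>e\<in>M. edge_mono e) | M. matching E M \<and> card M = k}"

end

theory Submission imports Defs begin

lemma matching_subset: "matching E P \<Longrightarrow> Q \<subseteq> P \<Longrightarrow> matching E Q"
  unfolding matching_def by blast

lemma sum_parts:
  fixes w :: "'b \<Rightarrow> nat"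
  assumes "finite A" "finite B" "finite C" "A \<inter> B = {}" "A \<inter> C = {}" "B \<inter> C = {}"
    "\<forall>e\<in>A. w e = 2" "\<forall>e\<in>B. w e = 1" "\<forall>e\<in>C. w e = 0"
  shows "sum w (A \<union> B \<union> C) = 2 * card A + card B"
proof -
  have "sum w (A \<union> B \<union> C) = sum w A + sum w B + sum w C"
    using assms by (simp add: sum.union_disjoint Int_Un_distrib2)
  also have "sum w A = 2 * card A" using assms(7) by simp
  also have "sum w B = card B" using assms(8) by simp
  also have "sum w C = 0" using assms(9) by simp
  finally show ?thesis by simp
qed

lemma card_union_matching:
  assumes "matching E Q" "finite Q" "\<forall>e\<in>E. card e = 2"
  shows "card (\<Union>Q \<inter> S) = (\<Sum>e\<in>Q. card (e \<inter> S))"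
    and "card (\<Union>Q - S) = (\<Sum>e\<in>Q. card (e - S))"
proof -
  have fe: "\<forall>e\<in>Q. finite e" using assms unfolding matching_def
    by (metis card.infinite subsetD zero_neq_numeral)
  have dj: "\<forall>i\<in>Q. \<forall>j\<in>Q. i \<noteq> j \<longrightarrow> i \<inter> j = {}" using assms(1) unfolding matching_def by blast
  have "\<Union>Q \<inter> S = (\<Union>e\<in>Q. e \<inter> S)" by blast
  moreover have "card (\<Union>e\<in>Q. e \<inter> S) = (\<Sum>e\<in>Q. card (e \<inter> S))"
    using assms(2) fe dj by (subst card_UN_disjoint) (auto, blast+)
  ultimately show "card (\<Union>Q \<inter> S) = (\<Sum>e\<in>Q. card (e \<inter> S))" by simp
  have "\<Union>Q - S = (\<Union>e\<in>Q. e - S)" by blast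
  moreover have "card (\<Union>e\<in>Q. e - S) = (\<Sum>e\<in>Q. card (e - S))"
    using assms(2) fe dj by (subst card_UN_disjoint) (auto, blast+)
  ultimately show "card (\<Union>Q - S) = (\<Sum>e\<in>Q. card (e - S))" by simp
qed

lemma comb:
  fixes E :: "nat set set" and S :: "nat set"
  assumes fin: "finite E" and two: "\<forall>e\<in>E. card e = 2"
    and ex: "\<exists>N. matching E N \<and> card N = l" and lk: "l < k"
    and H: "\<forall>N. matching E N \<and> card N = l \<longrightarrow> (\<exists>P. matching E P \<and> card P = k \<and> \<Union>P \<subseteq> S \<union> \<Union>N)"
  shows "\<exists>M. matching E M \<and> card M = k \<and> \<Union>M \<subseteq> S"
proof (rule ccontr)
  assume nok: "\<not> ?thesis"
  define w where "w e = card (e \<inter> S)" for e :: "nat set"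
  define Ls where "Ls = {N. matching E N \<and> card N = l}"
  have "Ls \<subseteq> Pow E" unfolding Ls_def matching_def by blast
  then have finLs: "finite Ls" using fin by (simp add: finite_subset)
  have neLs: "Ls \<noteq> {}" using ex unfolding Ls_def by blast
  define cov where "cov N = sum w N" for N
  obtain N where NL: "N \<in> Ls" and Nmax: "\<forall>N'\<in>Ls. cov N' \<le> cov N"
  proof -
    have "Max (cov ` Ls) \<in> cov ` Ls" using finLs neLs by simp
    then obtain N where "N \<in> Ls" "cov N = Max (cov ` Ls)" by auto
    moreover have "\<forall>N'\<in>Ls. cov N' \<le> Max (cov ` Ls)" using finLs by simp
    ultimately show ?thesis using that by auto
  qed
  have mN: "matching E N" and cN: "card N = l" using NL unfolding Ls_def by auto
  have finN: "finite N" using mN fin unfolding matching_def using finite_subset by blast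
  obtain P where mP: "matching E P" and cP: "card P = k" and sP: "\<Union>P \<subseteq> S \<union> \<Union>N"
    using H mN cN by blast
  have finP: "finite P" using mP fin unfolding matching_def using finite_subset by blast
  have PE: "P \<subseteq> E" using mP unfolding matching_def by blast
  have NE: "N \<subseteq> E" using mN unfolding matching_def by blast
  have fe: "finite e" if "e \<in> E" for e using two that by (metis card.infinite zero_neq_numeral)
  have wle: "w e \<le> 2" if "e \<in> E" for e
    using two that fe[OF that] unfolding w_def by (metis Int_lower1 card_mono)
  have cdiff: "card (e - S) = 2 - w e" if "e \<in> E" for e
  proof -
    have "card e = card (e \<inter> S) + card (e - S)"
      using fe[OF that] by (metis Int_Diff_disjoint Int_Diff_Un card_Un_disjoint finite_Diff finite_Int)
    then show ?thesis using two that unfolding w_def by simp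
  qed
  define c where "c = cov N"
  have ncov: "card (\<Union>N - S) = 2 * l - c"
  proof -
    have "card (\<Union>N - S) = (\<Sum>e\<in>N. card (e - S))" using card_union_matching(2)[OF mN finN two] .
    also have "\<dots> = (\<Sum>e\<in>N. 2 - w e)" using NE cdiff by (intro sum.cong) auto
    also have "\<dots> = (\<Sum>e\<in>N. 2) - (\<Sum>e\<in>N. w e)" using NE wle by (intro sum_subtractf_nat) auto
    finally show ?thesis unfolding c_def cov_def using cN by simp
  qed
  define P2 where "P2 = {e\<in>P. w e = 2}"
  define P1 where "P1 = {e\<in>P. w e = 1}"
  define P0 where "P0 = {e\<in>P. w e = 0}"
  have Pu: "P = P2 \<union> P1 \<union> P0" unfolding P2_def P1_def P0_def using PE wle by force
  have fins: "finite P2" "finite P1" "finite P0" unfolding P2_def P1_def P0_def using finP by auto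
  have djs: "P2 \<inter> P1 = {}" "P2 \<inter> P0 = {}" "P1 \<inter> P0 = {}" unfolding P2_def P1_def P0_def by auto
  define a where "a = card P2"
  define b where "b = card P1"
  define d where "d = card P0"
  have abd: "a + b + d = k" unfolding a_def b_def d_def using cP Pu fins djs
    by (simp add: card_Un_disjoint Int_Un_distrib2)
  have Pout: "card (\<Union>P - S) = 2 * d + b"
  proof -
    have "card (\<Union>P - S) = (\<Sum>e\<in>P. card (e - S))" using card_union_matching(2)[OF mP finP two] .
    also have "\<dots> = (\<Sum>e\<in>P0 \<union> P1 \<union> P2. card (e - S))" using Pu by (simp add: Un_ac)
    also have "\<dots> = 2 * card P0 + card P1"
      by (rule sum_parts) (use fins djs PE cdiff in \<open>auto simp: P2_def P1_def P0_def\<close>)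
    finally show ?thesis unfolding d_def b_def by simp
  qed
  have "\<Union>P - S \<subseteq> \<Union>N - S" using sP by blast
  then have "card (\<Union>P - S) \<le> card (\<Union>N - S)"
    by (rule card_mono[rotated]) (use finN NE fe in auto)
  hence bd: "2 * d + b \<le> 2 * l - c" using Pout ncov by simp
  have Qle: "sum w Q \<le> c" if "Q \<subseteq> P" "card Q = l" for Q
  proof -
    have "Q \<in> Ls" unfolding Ls_def using matching_subset[OF mP that(1)] that(2) by simp
    then show ?thesis using Nmax unfolding c_def cov_def by blast
  qed
  have cle: "c \<le> 2 * l"
  proof -
    have "c = (\<Sum>e\<in>N. w e)" unfolding c_def cov_def ..
    also have "\<dots> \<le> (\<Sum>e\<in>N. 2)" using NE wle by (intro sum_mono) auto
    finally show ?thesis using cN by simp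
  qed
  show False
  proof (cases "l \<le> a")
    case True
    obtain Q where Q: "Q \<subseteq> P2" "card Q = l" using True unfolding a_def
      by (meson obtain_subset_with_card_n)
    have "sum w Q = (\<Sum>e\<in>Q. 2)" by (rule sum.cong) (use Q in \<open>auto simp: P2_def\<close>)
    hence "sum w Q = 2 * l" using Q by simp
    hence "2 * l \<le> c" using Qle[of Q] Q P2_def by auto
    hence "b = 0" "d = 0" using bd by auto
    hence "P1 = {}" "P0 = {}" using fins unfolding b_def d_def by auto
    hence "P = P2" using Pu by simp
    have "\<forall>e\<in>P. e \<subseteq> S"
    proof
      fix e assume eP: "e \<in> P"
      then have eP2: "e \<in> P2" and eE: "e \<in> E" using \<open>P = P2\<close> PE by auto
      have "card (e \<inter> S) = card e" using eP2 two eE unfolding P2_def w_def by auto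
      then have "e \<inter> S = e" by (intro card_subset_eq[OF fe[OF eE]]) auto
      then show "e \<subseteq> S" by blast
    qed
    hence "\<Union>P \<subseteq> S" by blast
    then show False using nok mP cP by blast
  next
    case False
    show False
    proof (cases "b \<le> l - a")
      case True
      have "l - a - b \<le> card P0" using abd lk unfolding d_def by linarith
      then obtain Q0 where Q0: "Q0 \<subseteq> P0" "card Q0 = l - a - b"
        by (meson obtain_subset_with_card_n)
      have fQ0: "finite Q0" using Q0 fins finite_subset by blast
      have "sum w (P2 \<union> P1 \<union> Q0) = 2 * card P2 + card P1"
        by (rule sum_parts) (use fins fQ0 djs Q0 in \<open>auto simp: P2_def P1_def P0_def\<close>)
      moreover have "card (P2 \<union> P1 \<union> Q0) = l"
      proof -
        have "card (P2 \<union> P1) = a + b" using fins djs unfolding a_def b_def by (simp add: card_Un_disjoint)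
        moreover have "(P2 \<union> P1) \<inter> Q0 = {}" using djs Q0 by blast
        ultimately have "card (P2 \<union> P1 \<union> Q0) = a + b + (l - a - b)"
          using fins fQ0 Q0 by (simp add: card_Un_disjoint)
        then show ?thesis using True False by linarith
      qed
      moreover have "P2 \<union> P1 \<union> Q0 \<subseteq> P" using Pu Q0 by blast
      ultimately have "2 * a + b \<le> c" using Qle unfolding a_def b_def by metis
      then show False using bd abd lk cle by linarith
    next
      case True2: False
      obtain Q1 where Q1: "Q1 \<subseteq> P1" "card Q1 = l - a"
        using True2 unfolding b_def by (meson obtain_subset_with_card_n less_or_eq_imp_le not_le)
      have fQ1: "finite Q1" using Q1 fins finite_subset by blast
      have "sum w (P2 \<union> Q1 \<union> {}) = 2 * card P2 + card Q1"
        by (rule sum_parts) (use fins fQ1 djs Q1 in \<open>auto simp: P2_def P1_def P0_def\<close>)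
      moreover have "card (P2 \<union> Q1) = l"
      proof -
        have "P2 \<inter> Q1 = {}" using djs Q1 by blast
        then have "card (P2 \<union> Q1) = a + (l - a)" using fins fQ1 Q1 unfolding a_def by (simp add: card_Un_disjoint)
        then show ?thesis using False by linarith
      qed
      moreover have "P2 \<union> Q1 \<subseteq> P" using Pu Q1 by blast
      ultimately have "2 * a + (l - a) \<le> c" using Qle[of "P2 \<union> Q1"] Q1 unfolding a_def by simp
      then have "a + l \<le> c" using False by linarith
      then show False using bd True2 False by linarith
    qed
  qed
qed


definition mono :: "(nat \<Rightarrow>\<^sub>0 nat) \<Rightarrow> ('a::comm_ring_1) mpoly" where
  "mono t = Poly_Mapping.single t 1"

lemma keys_sum_subset: "Poly_Mapping.keys (sum f A) \<subseteq> (\<Union>x\<in>A. Poly_Mapping.keys (f x))"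
proof (induction A rule: infinite_finite_induct)
  case (insert x F)
  then show ?case using keys_add[of "f x" "sum f F"] by auto
qed auto

lemma keys_add_nat: "Poly_Mapping.keys (c + t :: nat \<Rightarrow>\<^sub>0 nat) = Poly_Mapping.keys c \<union> Poly_Mapping.keys t"
  by (auto simp: in_keys_iff lookup_add)

lemma poly_ring_mult:
  assumes "p \<in> poly_ring V" "q \<in> poly_ring V"
  shows "p * q \<in> poly_ring V"
  unfolding poly_ring_def
proof (intro CollectI ballI)
  fix m assume "m \<in> Poly_Mapping.keys (p * q)"
  then obtain a b where "m = a + b" "a \<in> Poly_Mapping.keys p" "b \<in> Poly_Mapping.keys q"
    using keys_mult by blast
  then show "Poly_Mapping.keys m \<subseteq> V" using assms unfolding poly_ring_def
    using keys_add_nat by blast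
qed

lemma poly_ring_add:
  assumes "p \<in> poly_ring V" "q \<in> poly_ring V"
  shows "p + q \<in> poly_ring V"
  using assms keys_add[of p q] unfolding poly_ring_def by blast

lemma poly_ring_sum:
  assumes "\<forall>x\<in>A. f x \<in> poly_ring V"
  shows "sum f A \<in> poly_ring V"
  using assms keys_sum_subset[of f A] unfolding poly_ring_def by blast

lemma poly_ring_single: "Poly_Mapping.keys c \<subseteq> V \<Longrightarrow> Poly_Mapping.single c a \<in> poly_ring V"
  unfolding poly_ring_def by auto

lemma ideal_gen_keys:
  assumes "p \<in> ideal_gen V (mono ` T)" "m \<in> Poly_Mapping.keys p"
  shows "\<exists>t\<in>T. \<exists>c. m = c + t"
proof -
  obtain F r where p: "p = (\<Sum>g\<in>F. r g * g)" and F: "F \<subseteq> mono ` T"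
    using assms(1) unfolding ideal_gen_def by blast
  have "m \<in> (\<Union>g\<in>F. Poly_Mapping.keys (r g * g))"
    using keys_sum_subset[of "\<lambda>g. r g * g" F] assms(2) unfolding p by blast
  then obtain g where g: "g \<in> F" "m \<in> Poly_Mapping.keys (r g * g)" by blast
  obtain t where t: "t \<in> T" "g = mono t" using F g by blast
  have "m \<in> {a + b | a b. a \<in> Poly_Mapping.keys (r g) \<and> b \<in> Poly_Mapping.keys (mono t :: 'a mpoly)}"
    using keys_mult[of "r g" "mono t"] g t by blast
  then obtain a b where "m = a + b" "b \<in> Poly_Mapping.keys (mono t :: 'a mpoly)" by blast
  then have "m = a + t" unfolding mono_def by simp
  then show ?thesis using t by blast
qed

lemma ideal_gen_poly_ring:
  assumes "\<forall>t\<in>T. Poly_Mapping.keys t \<subseteq> V" "p \<in> ideal_gen V (mono ` T :: ('a::comm_ring_1) mpoly set)"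
  shows "p \<in> poly_ring V"
proof -
  obtain F r where p: "p = (\<Sum>g\<in>F. r g * g)" and F: "F \<subseteq> mono ` T" and r: "\<forall>g\<in>F. r g \<in> poly_ring V"
    using assms(2) unfolding ideal_gen_def by blast
  have "\<forall>g\<in>F. g \<in> poly_ring V" using F assms(1) unfolding mono_def
    by (auto intro!: poly_ring_single)
  then show ?thesis unfolding p using r by (auto intro!: poly_ring_sum poly_ring_mult)
qed

lemma ideal_gen_zero: "0 \<in> ideal_gen V G"
  unfolding ideal_gen_def by (rule CollectI, rule exI[of _ "{}"]) auto

lemma ideal_gen_add:
  assumes "p \<in> ideal_gen V G" "q \<in> ideal_gen V G"
  shows "p + q \<in> ideal_gen V G"
proof -
  obtain F1 r1 where p: "p = (\<Sum>g\<in>F1. r1 g * g)" "finite F1" "F1 \<subseteq> G" "\<forall>g\<in>F1. r1 g \<in> poly_ring V"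
    using assms(1) unfolding ideal_gen_def by blast
  obtain F2 r2 where q: "q = (\<Sum>g\<in>F2. r2 g * g)" "finite F2" "F2 \<subseteq> G" "\<forall>g\<in>F2. r2 g \<in> poly_ring V"
    using assms(2) unfolding ideal_gen_def by blast
  define r where "r g = (if g \<in> F1 then r1 g else 0) + (if g \<in> F2 then r2 g else 0)" for g
  have z: "0 \<in> poly_ring V" unfolding poly_ring_def by simp
  have rr: "\<forall>g\<in>F1 \<union> F2. r g \<in> poly_ring V" unfolding r_def using p(4) q(4) z
    by (auto intro!: poly_ring_add)
  have "(\<Sum>g\<in>F1 \<union> F2. r g * g) = (\<Sum>g\<in>F1 \<union> F2. (if g \<in> F1 then r1 g * g else 0)) + (\<Sum>g\<in>F1 \<union> F2. (if g \<in> F2 then r2 g * g else 0))"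
    unfolding sum.distrib[symmetric] by (rule sum.cong) (auto simp: r_def distrib_right)
  also have "(\<Sum>g\<in>F1 \<union> F2. (if g \<in> F1 then r1 g * g else 0)) = (\<Sum>g\<in>F1. r1 g * g)"
    using p(2) q(2) by (simp add: sum.If_cases Int_absorb1)
  also have "(\<Sum>g\<in>F1 \<union> F2. (if g \<in> F2 then r2 g * g else 0)) = (\<Sum>g\<in>F2. r2 g * g)"
    using p(2) q(2) by (simp add: sum.If_cases Int_absorb1)
  finally have "p + q = (\<Sum>g\<in>F1 \<union> F2. r g * g)" using p(1) q(1) by simp
  then show ?thesis unfolding ideal_gen_def using p(2,3) q(2,3) rr by blast
qed

lemma ideal_gen_sum:
  assumes "finite A" "\<forall>x\<in>A. f x \<in> ideal_gen V G"
  shows "sum f A \<in> ideal_gen V G"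
  using assms by (induction A rule: finite_induct) (auto intro: ideal_gen_zero ideal_gen_add)

lemma ideal_gen_gen: "g \<in> G \<Longrightarrow> r \<in> poly_ring V \<Longrightarrow> r * g \<in> ideal_gen V G"
  unfolding ideal_gen_def by (rule CollectI, rule exI[of _ "{g}"], rule exI[of _ "\<lambda>_. r"]) auto

lemma poly_expansion: "p = (\<Sum>m\<in>Poly_Mapping.keys p. Poly_Mapping.single m (Poly_Mapping.lookup p m))"
proof (rule poly_mapping_eqI)
  fix k
  show "Poly_Mapping.lookup p k = Poly_Mapping.lookup (\<Sum>m\<in>Poly_Mapping.keys p. Poly_Mapping.single m (Poly_Mapping.lookup p m)) k"
    by (auto simp: lookup_sum lookup_single when_def in_keys_iff)
qed

lemma ideal_gen_monomial:
  assumes "p \<in> poly_ring V" "\<forall>m\<in>Poly_Mapping.keys p. \<exists>t\<in>T. \<exists>c. m = c + t"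
  shows "p \<in> ideal_gen V (mono ` T :: ('a::comm_ring_1) mpoly set)"
proof -
  have "Poly_Mapping.single m (Poly_Mapping.lookup p m) \<in> ideal_gen V (mono ` T)"
    if m: "m \<in> Poly_Mapping.keys p" for m
  proof -
    obtain t c where t: "t \<in> T" "m = c + t" using assms(2) m by blast
    have "Poly_Mapping.keys c \<subseteq> V" using assms(1) m t(2) keys_add_nat unfolding poly_ring_def by blast
    then have "Poly_Mapping.single c (Poly_Mapping.lookup p m) * mono t \<in> ideal_gen V (mono ` T)"
      using t(1) by (intro ideal_gen_gen poly_ring_single) auto
    then show ?thesis unfolding mono_def using t(2) by (simp add: mult_single)
  qed
  then have "(\<Sum>m\<in>Poly_Mapping.keys p. Poly_Mapping.single m (Poly_Mapping.lookup p m)) \<in> ideal_gen V (mono ` T)"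
    by (intro ideal_gen_sum) auto
  then show ?thesis using poly_expansion[of p] by simp
qed

lemma lookup_mult_mono: "Poly_Mapping.lookup (p * mono t) (m + t) = Poly_Mapping.lookup p m"
proof -
  have "p * mono t = (\<Sum>a\<in>Poly_Mapping.keys p. Poly_Mapping.single a (Poly_Mapping.lookup p a)) * mono t"
    using poly_expansion[of p] by simp
  also have "\<dots> = (\<Sum>a\<in>Poly_Mapping.keys p. Poly_Mapping.single (a + t) (Poly_Mapping.lookup p a))"
    unfolding mono_def by (simp add: sum_distrib_right mult_single)
  finally show ?thesis
    by (auto simp: lookup_sum lookup_single when_def in_keys_iff)
qed


definition expo :: "nat set set \<Rightarrow> (nat \<Rightarrow>\<^sub>0 nat)" where
  "expo M = (\<Sum>e\<in>M. \<Sum>i\<in>e. Poly_Mapping.single i 1)"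

lemma prod_edge: "(\<Prod>e\<in>M. edge_mono e :: ('a::comm_ring_1) mpoly) = mono (expo M)"
  unfolding expo_def
proof (induction M rule: infinite_finite_induct)
  case (infinite A)
  then show ?case by (simp add: mono_def)
next
  case empty
  then show ?case by (simp add: mono_def)
next
  case (insert x F)
  then show ?case by (simp add: mono_def edge_mono_def mult_single)
qed

lemma lookup_expo:
  assumes "matching E M" "finite M" "\<forall>e\<in>E. card e = 2"
  shows "Poly_Mapping.lookup (expo M) j = (if j \<in> \<Union>M then 1 else 0)"
proof -
  have fe: "finite e" if "e \<in> M" for e using assms that unfolding matching_def
    by (metis card.infinite subsetD zero_neq_numeral)
  have "Poly_Mapping.lookup (expo M) j = (\<Sum>e\<in>M. if j \<in> e then 1 else 0)"
    unfolding expo_def lookup_sum lookup_single when_def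
    by (rule sum.cong) (auto simp: fe)
  also have "\<dots> = (if j \<in> \<Union>M then 1 else 0)"
  proof (cases "j \<in> \<Union>M")
    case True
    then obtain e0 where e0: "e0 \<in> M" "j \<in> e0" by blast
    have "(\<Sum>e\<in>M. if j \<in> e then 1 else 0) = (\<Sum>e\<in>M. if e = e0 then 1 else (0::nat))"
      using assms(1) e0 unfolding matching_def by (intro sum.cong refl) (metis IntI empty_iff)
    also have "\<dots> = 1" using e0 assms(2) by simp
    finally show ?thesis using True by simp
  next
    case False
    then show ?thesis by (auto intro!: sum.neutral)
  qed
  finally show ?thesis .
qed

lemma keys_expo:
  assumes "matching E M" "finite M" "\<forall>e\<in>E. card e = 2"
  shows "Poly_Mapping.keys (expo M) = \<Union>M"
  using lookup_expo[OF assms] by (auto simp: in_keys_iff split: if_splits)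

lemma sqf_power_eq:
  "sqf_power V E k = ideal_gen V (mono ` {expo M | M. matching E M \<and> card M = k} :: ('a::comm_ring_1) mpoly set)"
proof -
  have "{(\<Prod>e\<in>M. edge_mono e) | M. matching E M \<and> card M = k} = (mono ` {expo M | M. matching E M \<and> card M = k} :: 'a mpoly set)"
    by (simp only: prod_edge) blast
  then show ?thesis unfolding sqf_power_def by simp
qed

theorem corollary6p6:
  fixes n k l :: nat and E :: "nat set set"
  assumes "simple_graph n E"
    and "equimatchable E"
    and "1 \<le> l" and "l < k" and "k \<le> matching_number E"
  shows "colon_ideal {1..n} (sqf_power {1..n} E k :: ('a::field) mpoly set)
           (sqf_power {1..n} E l) = sqf_power {1..n} E k"
proof -
  define V where "V = {1..n}"
  have two: "\<forall>e\<in>E. card e = 2" and EV: "\<forall>e\<in>E. e \<subseteq> V" using assms(1) unfolding simple_graph_def V_def by auto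
  have "E \<subseteq> Pow V" using EV by blast
  then have finE: "finite E" unfolding V_def by (simp add: finite_subset)
  have finM: "finite M" if "matching E M" for M using that finE unfolding matching_def using finite_subset by blast
  define T where "T j = {expo M | M. matching E M \<and> card M = j}" for j
  have sq: "sqf_power V E j = ideal_gen V (mono ` T j :: 'a mpoly set)" for j
    unfolding T_def by (rule sqf_power_eq)
  have TV: "\<forall>t\<in>T j. Poly_Mapping.keys t \<subseteq> V" for j
  proof
    fix t assume "t \<in> T j"
    then obtain M where M: "t = expo M" "matching E M" unfolding T_def by blast
    then have "Poly_Mapping.keys t = \<Union>M" using keys_expo[OF M(2) finM[OF M(2)] two] by simp
    then show "Poly_Mapping.keys t \<subseteq> V" using M(2) EV unfolding matching_def by blast
  qed
  have exl: "\<exists>N. matching E N \<and> card N = l"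
  proof -
    have "{M. matching E M} \<subseteq> Pow E" unfolding matching_def by blast
    then have "finite {M. matching E M}" using finE by (simp add: finite_subset)
    then have fc: "finite {card M | M. matching E M}" by simp
    have "matching E {}" unfolding matching_def by simp
    then have "{card M | M. matching E M} \<noteq> {}" by blast
    then have "matching_number E \<in> {card M | M. matching E M}" unfolding matching_number_def
      using fc Max_in by blast
    then obtain M0 where M0: "matching E M0" "card M0 = matching_number E" by auto
    then have "l \<le> card M0" using assms(4,5) by simp
    then obtain N where "N \<subseteq> M0" "card N = l" by (meson obtain_subset_with_card_n)
    then show ?thesis using matching_subset[OF M0(1)] by blast
  qed
  have "colon_ideal V (ideal_gen V (mono ` T k)) (ideal_gen V (mono ` T l)) = (ideal_gen V (mono ` T k) :: 'a mpoly set)"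
  proof (intro equalityI subsetI)
    fix f :: "'a mpoly" assume f: "f \<in> ideal_gen V (mono ` T k)"
    have fP: "f \<in> poly_ring V" using ideal_gen_poly_ring[OF TV f] .
    have "f * g \<in> ideal_gen V (mono ` T k)" if g: "g \<in> ideal_gen V (mono ` T l)" for g
    proof (rule ideal_gen_monomial)
      have "g \<in> poly_ring V" using ideal_gen_poly_ring[OF TV g] .
      then show "f * g \<in> poly_ring V" using fP poly_ring_mult by blast
      show "\<forall>m\<in>Poly_Mapping.keys (f * g). \<exists>t\<in>T k. \<exists>c. m = c + t"
      proof
        fix m assume "m \<in> Poly_Mapping.keys (f * g)"
        then have "m \<in> {a + b | a b. a \<in> Poly_Mapping.keys f \<and> b \<in> Poly_Mapping.keys g}"
          using keys_mult[of f g] by blast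
        then obtain a b where ab: "m = a + b" "a \<in> Poly_Mapping.keys f" by blast
        obtain t c where "t \<in> T k" "a = c + t" using ideal_gen_keys[OF f ab(2)] by blast
        then show "\<exists>t\<in>T k. \<exists>c. m = c + t" using ab(1) by (metis add.commute add.left_commute)
      qed
    qed
    then show "f \<in> colon_ideal V (ideal_gen V (mono ` T k)) (ideal_gen V (mono ` T l))"
      unfolding colon_ideal_def using fP by blast
  next
    fix f :: "'a mpoly" assume f: "f \<in> colon_ideal V (ideal_gen V (mono ` T k)) (ideal_gen V (mono ` T l))"
    have fP: "f \<in> poly_ring V" and fg: "\<forall>g\<in>ideal_gen V (mono ` T l). f * g \<in> ideal_gen V (mono ` T k)"
      using f unfolding colon_ideal_def by auto
    have one: "(1::'a mpoly) \<in> poly_ring V" unfolding poly_ring_def by simp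
    show "f \<in> ideal_gen V (mono ` T k)"
    proof (rule ideal_gen_monomial[OF fP], rule ballI)
      fix m assume m: "m \<in> Poly_Mapping.keys f"
      have H: "\<forall>N. matching E N \<and> card N = l \<longrightarrow> (\<exists>P. matching E P \<and> card P = k \<and> \<Union>P \<subseteq> Poly_Mapping.keys m \<union> \<Union>N)"
      proof (intro allI impI)
        fix N assume N: "matching E N \<and> card N = l"
        then have "expo N \<in> T l" unfolding T_def by blast
        then have "1 * mono (expo N) \<in> ideal_gen V (mono ` T l :: 'a mpoly set)"
          by (intro ideal_gen_gen one) auto
        then have "f * mono (expo N) \<in> ideal_gen V (mono ` T k)" using fg by simp
        moreover have "m + expo N \<in> Poly_Mapping.keys (f * mono (expo N))"
          using m lookup_mult_mono[of f "expo N" m] by (simp add: in_keys_iff)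
        ultimately obtain t c where tc: "t \<in> T k" "m + expo N = c + t" using ideal_gen_keys by blast
        then obtain P where P: "t = expo P" "matching E P" "card P = k" unfolding T_def by blast
        have "\<Union>P \<subseteq> Poly_Mapping.keys m \<union> \<Union>N"
        proof
          fix i assume i: "i \<in> \<Union>P"
          have "Poly_Mapping.lookup (m + expo N) i = Poly_Mapping.lookup (c + t) i" using tc by simp
          then have "Poly_Mapping.lookup m i + (if i \<in> \<Union>N then 1 else 0) = Poly_Mapping.lookup c i + 1"
            using lookup_expo[OF P(2) finM[OF P(2)] two, of i] lookup_expo[of E N i] N finM two i P(1)
            by (simp add: lookup_add)
          then show "i \<in> Poly_Mapping.keys m \<union> \<Union>N" by (auto simp: in_keys_iff split: if_splits)
        qed
        then show "\<exists>P. matching E P \<and> card P = k \<and> \<Union>P \<subseteq> Poly_Mapping.keys m \<union> \<Union>N" using P by blast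
      qed
      obtain M where M: "matching E M" "card M = k" "\<Union>M \<subseteq> Poly_Mapping.keys m"
        using comb[OF finE two exl assms(4) H] by blast
      have le: "Poly_Mapping.lookup (expo M) i \<le> Poly_Mapping.lookup m i" for i
        using lookup_expo[OF M(1) finM[OF M(1)] two, of i] M(3) by (auto simp: in_keys_iff)
      have "m = (m - expo M) + expo M"
        by (rule poly_mapping_eqI) (simp add: lookup_add lookup_minus le)
      moreover have "expo M \<in> T k" unfolding T_def using M by blast
      ultimately show "\<exists>t\<in>T k. \<exists>c. m = c + t" by blast
    qed
  qed
  then show ?thesis using sq unfolding V_def by simp
qed

end
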